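(* Let $\sigma_0,\sigma_1,\dots,\sigma_6$ be linearly independent real bivariate polynomials, each of exact degree $k$ and without multiple factors. Then there is a polynomial $\sigma$ in the linear span of $\sigma_1,\dots,\sigma_6$ which has no multiple factors and differs from $\sigma_0$ by a factor of degree at least three, i.e. $\sigma=\gamma r$ and $\sigma_0=\gamma_0 r$ with $\gamma,\gamma_0$ relatively prime and $\deg\gamma_0\ge3$.
   Context: A polynomial has a multiple factor if it is divisible by $r^2$ for some polynomial $r$ of degree $\ge1$. *)

theory Defs
  imports "HOL-Computational_Algebra.Polynomial"
begin

text \<open>Real bivariate polynomials are represented as real poly poly
  (polynomials in y whose coefficients are polynomials in x).\<close>

type_synonym bipoly = "real poly poly"

definition tdeg :: "bipoly \<Rightarrow> nat" where
  "tdeg p = (if p = 0 then 0 else Max {degree (coeff p i) + i | i. coeff p i \<noteq> 0})"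

definition rscale :: "real \<Rightarrow> bipoly \<Rightarrow> bipoly" where
  "rscale c p = smult [:c:] p"

definition has_multiple_factor :: "bipoly \<Rightarrow> bool" where
  "has_multiple_factor p \<longleftrightarrow> (\<exists>r. tdeg r \<ge> 1 \<and> r ^ 2 dvd p)"

end

theory Submission
  imports Defs "HOL-Computational_Algebra.Squarefree" "HOL-Computational_Algebra.Field_as_Ring" "HOL-Computational_Algebra.Polynomial_Factorial" "HOL-Analysis.Analysis"
begin


lemma hom_sum:
  assumes "\<And>a b. h (a + b) = h a + h b" "h 0 = 0"
  shows "h (sum f A) = (\<Sum>x\<in>A. h (f x))"
  by (induction A rule: infinite_finite_induct) (auto simp: assms)

lemma map_poly_add_hom:
  assumes "\<And>a b. h (a + b) = h a + h b" "h 0 = 0"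
  shows "map_poly h (p + q) = map_poly h p + map_poly h q"
  by (rule poly_eqI) (simp add: coeff_map_poly assms)

lemma map_poly_mult_hom:
  fixes h :: "'a::comm_semiring_1 \<Rightarrow> 'b::comm_semiring_1"
  assumes "\<And>a b. h (a + b) = h a + h b" "h 0 = 0" "\<And>a b. h (a * b) = h a * h b"
  shows "map_poly h (p * q) = map_poly h p * map_poly h q"
proof (rule poly_eqI)
  fix n
  show "coeff (map_poly h (p * q)) n = coeff (map_poly h p * map_poly h q) n"
    by (simp add: coeff_map_poly assms coeff_mult hom_sum[of h, OF assms(1,2)])
qed

definition bh0 :: "real \<Rightarrow> bipoly" where "bh0 r = [:[:r:]:]"
definition blift :: "real poly \<Rightarrow> bipoly" where "blift c = poly (map_poly bh0 c) [:0, [:0,1:]:]"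
definition bpsi :: "bipoly \<Rightarrow> bipoly" where "bpsi p = poly (map_poly blift p) [:0,1:]"

lemma h0_add: "bh0 (a + b) = bh0 a + bh0 b" and h0_0: "bh0 0 = 0" and h0_mult: "bh0 (a*b) = bh0 a * bh0 b"
  by (simp_all add: bh0_def)

lemma lift_add: "blift (a + b) = blift a + blift b"
  by (simp add: blift_def map_poly_add_hom[of bh0, OF h0_add h0_0])
lemma lift_0: "blift 0 = 0" by (simp add: blift_def)
lemma lift_mult: "blift (a * b) = blift a * blift b"
  by (simp add: blift_def map_poly_mult_hom[of bh0, OF h0_add h0_0 h0_mult])

lemma psi_mult: "bpsi (a * b) = bpsi a * bpsi b"
  by (simp add: bpsi_def map_poly_mult_hom[of blift, OF lift_add lift_0 lift_mult])

lemma poly_XY_pow: "([:0, [:0,1:]:] :: bipoly) ^ i = monom (monom 1 i) i"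
proof -
  have "([:0, [:0,1:]:] :: bipoly) = monom (monom 1 1) 1" by (simp add: monom_altdef)
  thus ?thesis by (simp add: monom_power)
qed

lemma coeff_lift: "coeff (blift c) a = monom (coeff c a) a"
proof -
  have "blift c = (\<Sum>i\<le>degree (map_poly bh0 c). coeff (map_poly bh0 c) i * monom (monom 1 i) i)"
    unfolding blift_def poly_altdef poly_XY_pow ..
  also have "\<dots> = (\<Sum>i\<le>degree (map_poly bh0 c). monom (monom (coeff c i) i) i)"
    by (intro sum.cong refl) (simp add: coeff_map_poly bh0_def smult_monom monom_altdef)
  finally have L: "blift c = \<dots>" .
  have D: "degree (map_poly bh0 c) = degree c" by (rule degree_map_poly) (auto simp: bh0_def)
  show ?thesis unfolding L coeff_sum D
    by (cases "a \<le> degree (map_poly bh0 c)") (auto simp: coeff_monom coeff_map_poly bh0_def intro!: coeff_eq_0 elim!: le_less_trans[rotated])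
qed

lemma lift_0': "blift 0 = 0" by (simp add: blift_def)

lemma coeff_psi: "coeff (bpsi p) n = (\<Sum>i\<le>n. monom (coeff (coeff p i) (n-i)) (n-i))"
proof -
  have D: "degree (map_poly blift p) \<le> degree p" by (rule map_poly_degree_leq)
  have Y: "([:0,1:] :: bipoly) ^ i = monom 1 i" for i by (simp add: monom_altdef)
  have "bpsi p = (\<Sum>i\<le>degree p. coeff (map_poly blift p) i * monom 1 i)"
    unfolding bpsi_def poly_altdef Y
    by (intro sum.mono_neutral_left) (auto simp: D intro: coeff_eq_0)
  also have "\<dots> = (\<Sum>i\<le>degree p. monom 1 i * blift (coeff p i))"
    by (intro sum.cong) (auto simp: coeff_map_poly lift_0 mult.commute)
  finally have "bpsi p = \<dots>" .
  hence "coeff (bpsi p) n = (\<Sum>i\<le>degree p. if i \<le> n then monom (coeff (coeff p i) (n-i)) (n-i) else 0)"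
    by (simp add: coeff_sum coeff_monom_mult, intro sum.cong) (auto simp: coeff_lift)
  also have "\<dots> = (\<Sum>i\<le>max n (degree p). if i \<le> n then monom (coeff (coeff p i) (n-i)) (n-i) else 0)"
    by (intro sum.mono_neutral_left) (auto simp: coeff_eq_0)
  also have "\<dots> = (\<Sum>i\<le>n. monom (coeff (coeff p i) (n-i)) (n-i))"
    by (intro sum.mono_neutral_cong_right) (auto simp: coeff_eq_0)
  finally show ?thesis .
qed

lemma tdeg_set: "{degree (coeff p i) + i | i. coeff p i \<noteq> 0} = (\<lambda>i. degree (coeff p i) + i) ` {i. coeff p i \<noteq> 0}"
  by auto

lemma tdeg_set_finite: "finite {degree (coeff p i) + i | i. coeff p i \<noteq> 0}"
proof -
  have "{i. coeff p i \<noteq> 0} \<subseteq> {..degree p}" by (auto intro: le_degree)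
  hence "finite {i. coeff p i \<noteq> 0}" by (rule finite_subset) auto
  thus ?thesis unfolding tdeg_set by simp
qed

lemma tdeg_ge:
  assumes "coeff (coeff p i) a \<noteq> 0" shows "a + i \<le> tdeg p"
proof -
  have c: "coeff p i \<noteq> 0" using assms by auto
  hence p: "p \<noteq> 0" by auto
  have "a \<le> degree (coeff p i)" using assms by (rule le_degree)
  moreover have "degree (coeff p i) + i \<le> tdeg p"
    unfolding tdeg_def using p c tdeg_set_finite[of p] by (auto intro!: Max_ge)
  ultimately show ?thesis by simp
qed

lemma tdeg_witness:
  assumes "p \<noteq> 0" shows "\<exists>i. coeff p i \<noteq> 0 \<and> degree (coeff p i) + i = tdeg p"
proof -
  have ne: "{degree (coeff p i) + i | i. coeff p i \<noteq> 0} \<noteq> {}"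
    using assms by (auto simp: poly_eq_iff)
  have "tdeg p \<in> {degree (coeff p i) + i | i. coeff p i \<noteq> 0}"
    unfolding tdeg_def using assms Max_in[OF tdeg_set_finite ne] by simp
  thus ?thesis by auto
qed

lemma coeff_psi_gt: assumes "n > tdeg p" shows "coeff (bpsi p) n = 0"
proof -
  have "coeff (coeff p i) (n - i) = 0" if "i \<le> n" for i
    using tdeg_ge[of p i "n-i"] that assms by (cases "coeff (coeff p i) (n - i) = 0") auto
  thus ?thesis by (simp add: coeff_psi)
qed

lemma coeff_psi_tdeg: assumes "p \<noteq> 0" shows "coeff (bpsi p) (tdeg p) \<noteq> 0"
proof -
  obtain i where i: "coeff p i \<noteq> 0" "degree (coeff p i) + i = tdeg p"
    using tdeg_witness[OF assms] by blast
  define a where "a = degree (coeff p i)"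
  have "coeff (coeff (bpsi p) (tdeg p)) a = (\<Sum>j\<le>tdeg p. if tdeg p - j = a then coeff (coeff p j) a else 0)"
    by (simp add: coeff_psi coeff_sum coeff_monom, intro sum.cong) auto
  also have "\<dots> = (\<Sum>j\<in>{i}. if tdeg p - j = a then coeff (coeff p j) a else 0)"
    using i unfolding a_def by (intro sum.mono_neutral_right) auto
  also have "\<dots> = lead_coeff (coeff p i)" using i by (simp add: a_def)
  also have "\<dots> \<noteq> 0" using i by simp
  finally show ?thesis by auto
qed

lemma degree_psi: "degree (bpsi p) = tdeg p"
proof (cases "p = 0")
  case True thus ?thesis by (simp add: bpsi_def tdeg_def)
next
  case False
  show ?thesis
  proof (rule antisym)
    show "degree (bpsi p) \<le> tdeg p" by (rule degree_le) (auto intro: coeff_psi_gt)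
    show "tdeg p \<le> degree (bpsi p)" by (rule le_degree) (rule coeff_psi_tdeg[OF False])
  qed
qed

lemma psi_eq_0: "bpsi p = 0 \<longleftrightarrow> p = 0"
proof
  assume "bpsi p = 0" thus "p = 0" using coeff_psi_tdeg[of p] by (cases "p = 0") auto
qed (simp add: bpsi_def)

lemma tdeg_mult: assumes "a \<noteq> 0" "b \<noteq> 0" shows "tdeg (a * b) = tdeg a + tdeg b"
  using assms by (simp flip: degree_psi add: psi_mult degree_mult_eq psi_eq_0)




lemma dvd_pderiv_self:
  fixes f :: "'a::{idom, ring_char_0} poly"
  assumes "f dvd pderiv f" shows "pderiv f = 0"
proof (rule ccontr)
  assume nz: "pderiv f \<noteq> 0"
  hence "f \<noteq> 0" by auto
  have "degree f \<le> degree (pderiv f)" using assms nz by (rule dvd_imp_degree_le)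
  moreover have "degree (pderiv f) = degree f - 1" by (rule degree_pderiv)
  moreover have "degree f \<noteq> 0" using nz by (simp add: pderiv_eq_0_iff)
  ultimately show False by simp
qed

lemma square_dvd_pderiv:
  fixes F p :: "'a::idom poly"
  assumes "p ^ 2 dvd F" shows "p dvd pderiv F"
proof -
  obtain q where "F = p ^ 2 * q" using assms by blast
  hence "pderiv F = p * (2 * pderiv p * q + p * pderiv q)"
    by (simp add: pderiv_mult power2_eq_square algebra_simps)
  thus ?thesis by simp
qed

lemma pencil_deriv:
  fixes f g :: "'a::{factorial_ring_gcd, semiring_gcd_mult_normalize, ring_char_0} poly"
  assumes cop: "coprime f g" and inf: "infinite S"
    and un: "\<And>c d. c \<in> S \<Longrightarrow> d \<in> S \<Longrightarrow> c \<noteq> d \<Longrightarrow> is_unit (c - d)"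
    and nsq: "\<And>c. c \<in> S \<Longrightarrow> \<not> squarefree (f + smult c g)"
  shows "pderiv f = 0 \<and> pderiv g = 0"
proof -
  define F where "F c = f + smult c g" for c
  have diffF: "F c - F d = smult (c - d) g" for c d by (simp add: F_def smult_diff_left)
  have dvd_smult_unit: "p dvd g" if "p dvd smult u g" "is_unit u" for p u
  proof -
    have "smult u g = [:u:] * g" by simp
    moreover have "is_unit [:u:]" using that(2) by (simp add: is_unit_const_poly_iff)
    ultimately show ?thesis using that(1) by (metis dvd_mult_unit_iff')
  qed
  have common: "is_unit p" if "p dvd f" "p dvd g" for p using cop that by (rule coprime_common_divisor)
  define Z where "Z = {c\<in>S. F c = 0}"
  have Z: "finite Z"
  proof (rule ccontr)
    assume "infinite Z"
    then obtain c where c: "c \<in> Z" using infinite_imp_nonempty by blast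
    have "infinite (Z - {c})" using \<open>infinite Z\<close> by simp
    then obtain d where "d \<in> Z - {c}" using infinite_imp_nonempty by blast
    with c have cd: "c \<in> Z" "d \<in> Z" "c \<noteq> d" by auto
    have "smult (c - d) g = 0" using cd by (simp add: Z_def flip: diffF)
    moreover have "c - d \<noteq> 0" using cd by simp
    ultimately have "g = 0" by simp
    moreover from this have "f = 0" using cd by (simp add: Z_def F_def)
    ultimately show False using common[of 0] by simp
  qed
  define S' where "S' = S - Z"
  have S': "infinite S'" using inf Z by (simp add: S'_def)
  have ex: "\<exists>p. prime p \<and> p ^ 2 dvd F c" if "c \<in> S'" for c
  proof -
    have "F c \<noteq> 0" using that by (auto simp: S'_def Z_def)
    moreover have "\<not> squarefree (F c)" using that nsq by (auto simp: S'_def F_def)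
    ultimately show ?thesis by (auto simp: squarefree_factorial_semiring)
  qed
  define P where "P c = (SOME p. prime p \<and> p ^ 2 dvd F c)" for c
  have P: "prime (P c)" "P c ^ 2 dvd F c" if "c \<in> S'" for c
    using someI_ex[OF ex[OF that]] by (auto simp: P_def)
  have Pdvd: "P c dvd F c" if "c \<in> S'" for c
    using P(2)[OF that] by (metis dvd_mult_left power2_eq_square)
  have inj: "inj_on P S'"
  proof (rule inj_onI, rule ccontr)
    fix c d assume cd: "c \<in> S'" "d \<in> S'" "P c = P d" "c \<noteq> d"
    have "P c dvd smult (c - d) g" using Pdvd[OF cd(1)] Pdvd[OF cd(2)] cd(3) by (metis diffF dvd_diff)
    hence g: "P c dvd g" using un cd by (intro dvd_smult_unit) (auto simp: S'_def)
    hence "P c dvd smult c g" by (simp add: dvd_smult)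
    hence "P c dvd f" using Pdvd[OF cd(1)] by (metis F_def add_diff_cancel_right' dvd_diff)
    hence "is_unit (P c)" using g by (rule common)
    with P(1)[OF cd(1)] show False by simp
  qed
  define W where "W = g * pderiv f - pderiv g * f"
  have Wdvd: "P c dvd W" if "c \<in> S'" for c
  proof -
    have "W = g * pderiv (F c) - pderiv g * F c"
      by (simp add: W_def F_def pderiv_add pderiv_smult ring_distribs mult_smult_right mult_smult_left mult.commute)
    moreover have "P c dvd pderiv (F c)" using P(2)[OF that] by (rule square_dvd_pderiv)
    ultimately show ?thesis using Pdvd[OF that] by simp
  qed
  have W0: "W = 0"
  proof (rule ccontr)
    assume "W \<noteq> 0"
    hence "P ` S' \<subseteq> prime_factors W" using Wdvd P by (auto simp: in_prime_factors_iff)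
    hence "finite (P ` S')" by (rule finite_subset) simp
    hence "finite S'" using inj by (rule finite_imageD)
    with S' show False by simp
  qed
  hence eq: "g * pderiv f = pderiv g * f" by (simp add: W_def)
  have "f dvd g * pderiv f" unfolding eq by simp
  hence "f dvd pderiv f" using cop by (simp add: coprime_dvd_mult_right_iff)
  moreover have "g dvd pderiv g * f" unfolding eq[symmetric] by simp
  hence "g dvd pderiv g" using cop by (simp add: coprime_dvd_mult_left_iff coprime_commute)
  ultimately show ?thesis by (auto intro: dvd_pderiv_self)
qed




lemma sq_const:
  fixes c :: "'a::{factorial_ring_gcd, semiring_gcd_mult_normalize} "
  assumes "squarefree c" shows "squarefree [:c:]"
proof (rule squarefreeI)
  fix x :: "'a poly" assume x: "x ^ 2 dvd [:c:]"
  have "c \<noteq> 0" using assms by auto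
  hence "x \<noteq> 0" using x by auto
  have "degree (x ^ 2) \<le> degree [:c:]" using x \<open>c \<noteq> 0\<close> by (intro dvd_imp_degree_le) auto
  hence "degree x = 0" using \<open>x \<noteq> 0\<close> by (simp add: degree_power_eq)
  then obtain d where d: "x = [:d:]" by (rule degree_eq_zeroE)
  have "[:d ^ 2:] dvd [:c:]" using x by (simp add: d power2_eq_square)
  hence "d ^ 2 dvd c" by simp
  hence "is_unit d" using assms by (rule squarefreeD[rotated])
  thus "x dvd 1" by (simp add: d is_unit_const_poly_iff)
qed

lemma coprime_const:
  fixes a b :: "'a::{factorial_ring_gcd, semiring_gcd_mult_normalize}"
  assumes "coprime [:a:] [:b:]" shows "coprime a b"
proof (rule coprimeI)
  fix d assume "d dvd a" "d dvd b"
  hence "[:d:] dvd [:a:]" "[:d:] dvd [:b:]" by simp_all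
  hence "is_unit [:d:]" using assms by (intro coprime_common_divisor)
  thus "is_unit d" by (simp add: is_unit_const_poly_iff)
qed

lemma pencil_real:
  fixes a b :: "real poly"
  assumes cop: "coprime a b"
  shows "finite {t::real. \<not> squarefree (a + smult t b)}"
proof (rule ccontr)
  assume inf: "infinite {t::real. \<not> squarefree (a + smult t b)}"
  have "pderiv a = 0 \<and> pderiv b = 0"
    by (rule pencil_deriv[OF cop inf]) (auto simp: dvd_field_iff)
  then obtain \<alpha> \<beta> where ab: "a = [:\<alpha>:]" "b = [:\<beta>:]"
    by (metis degree_eq_zeroE pderiv_eq_0_iff)
  have nz: "\<alpha> \<noteq> 0 \<or> \<beta> \<noteq> 0"
  proof (rule ccontr)
    assume "\<not> ?thesis"
    hence "a = 0" "b = 0" using ab by auto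
    thus False using cop by simp
  qed
  have "{t::real. \<not> squarefree (a + smult t b)} \<subseteq> {t. \<alpha> + t * \<beta> = 0}"
  proof
    fix t assume "t \<in> {t::real. \<not> squarefree (a + smult t b)}"
    hence "\<not> squarefree [:\<alpha> + t * \<beta>:]" by (simp add: ab)
    hence "\<not> is_unit [:\<alpha> + t * \<beta>:]" using squarefree_unit by blast
    thus "t \<in> {t. \<alpha> + t * \<beta> = 0}" by (auto simp: is_unit_const_poly_iff dvd_field_iff)
  qed
  moreover have "finite {t::real. \<alpha> + t * \<beta> = 0}"
  proof (cases "\<beta> = 0")
    case True thus ?thesis using nz by simp
  next
    case False
    hence "{t::real. \<alpha> + t * \<beta> = 0} = {- \<alpha> / \<beta>}" by (auto simp: field_simps)
    thus ?thesis by simp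
  qed
  ultimately show False using inf by (meson finite_subset)
qed

lemma pencil_bi:
  fixes f g :: bipoly
  assumes cop: "coprime f g"
  shows "finite {t::real. \<not> squarefree (f + smult [:t:] g)}"
proof (rule ccontr)
  define S where "S = {t::real. \<not> squarefree (f + smult [:t:] g)}"
  assume "infinite {t::real. \<not> squarefree (f + smult [:t:] g)}"
  hence inf: "infinite S" by (simp add: S_def)
  have inf': "infinite ((\<lambda>t. [:t:]) ` S)" using inf by (subst finite_image_iff) (auto simp: inj_on_def)
  have "pderiv f = 0 \<and> pderiv g = 0"
    by (rule pencil_deriv[OF cop inf']) (auto simp: S_def is_unit_const_poly_iff dvd_field_iff)
  then obtain a b where ab: "f = [:a:]" "g = [:b:]"
    by (metis degree_eq_zeroE pderiv_eq_0_iff)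
  have copab: "coprime a b" using cop ab coprime_const by blast
  have "S \<subseteq> {t::real. \<not> squarefree (a + smult t b)}"
  proof
    fix t assume "t \<in> S"
    hence "\<not> squarefree [:a + smult t b:]" by (simp add: S_def ab)
    thus "t \<in> {t::real. \<not> squarefree (a + smult t b)}" using sq_const by blast
  qed
  with pencil_real[OF copab] inf show False by (meson finite_subset)
qed




lemma tdeg_1: "tdeg (1::bipoly) = 0"
proof -
  have "{degree (coeff (1::bipoly) i) + i | i. coeff (1::bipoly) i \<noteq> 0} = {0}"
    by (auto simp: coeff_1 split: if_splits)
  thus ?thesis by (simp add: tdeg_def)
qed

lemma unit_tdeg: assumes "is_unit (r::bipoly)" shows "tdeg r = 0"
proof -
  obtain r' where "1 = r * r'" using assms by (rule dvdE)
  moreover from this have "r \<noteq> 0" "r' \<noteq> 0" by auto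
  ultimately have "tdeg r + tdeg r' = 0" by (metis tdeg_1 tdeg_mult)
  thus ?thesis by simp
qed

lemma tdeg0_unit: assumes "(r::bipoly) \<noteq> 0" "tdeg r = 0" shows "is_unit r"
proof -
  have z: "coeff (coeff r i) a = 0" if "a + i > 0" for a i
    using tdeg_ge[of r i a] assms that by (cases "coeff (coeff r i) a = 0") auto
  define c where "c = coeff (coeff r 0) 0"
  have "coeff r 0 = [:c:]"
    by (rule poly_eqI) (auto simp: c_def coeff_pCons z split: nat.splits)
  moreover have "coeff r i = 0" if "i > 0" for i
    by (rule poly_eqI) (auto simp: z that)
  ultimately have "r = [:[:c:]:]"
    by (intro poly_eqI) (auto simp: coeff_pCons split: nat.splits)
  with assms have "c \<noteq> 0" by auto
  with \<open>r = _\<close> show ?thesis by (simp add: is_unit_const_poly_iff dvd_field_iff)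
qed

lemma hmf_0: "has_multiple_factor 0"
proof -
  have "coeff (coeff ([:0,1:]::bipoly) 1) 0 \<noteq> 0" by simp
  hence "0 + 1 \<le> tdeg ([:0,1:]::bipoly)" by (rule tdeg_ge)
  thus ?thesis unfolding has_multiple_factor_def by (intro exI[of _ "[:0,1:]"]) auto
qed

lemma hmf_iff: assumes "p \<noteq> 0" shows "has_multiple_factor p \<longleftrightarrow> \<not> squarefree p"
proof
  assume "has_multiple_factor p"
  then obtain r where r: "tdeg r \<ge> 1" "r ^ 2 dvd p" by (auto simp: has_multiple_factor_def)
  hence "\<not> is_unit r" using unit_tdeg by force
  thus "\<not> squarefree p" using r by (auto simp: squarefree_def)
next
  assume "\<not> squarefree p"
  then obtain x where x: "x ^ 2 dvd p" "\<not> is_unit x" by (auto simp: squarefree_def)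
  hence "x \<noteq> 0" using assms by auto
  hence "tdeg x \<ge> 1" using x tdeg0_unit by force
  thus "has_multiple_factor p" using x by (auto simp: has_multiple_factor_def)
qed

lemma not_hmf: "\<not> has_multiple_factor p \<longleftrightarrow> squarefree p"
  using hmf_iff[of p] hmf_0 by (cases "p = 0") auto




lemma sqf_dvd:
  fixes r x :: bipoly
  assumes sq: "squarefree r" and x: "x \<noteq> 0" and pr: "\<And>p. prime p \<Longrightarrow> p dvd r \<Longrightarrow> p dvd x"
  shows "r dvd x"
proof (rule multiplicity_le_imp_dvd)
  show r0: "r \<noteq> 0" using sq by auto
  fix p :: bipoly assume p: "prime p"
  have le1: "multiplicity p r \<le> 1" using sq r0 p by (auto simp: squarefree_factorial_semiring'')
  show "multiplicity p r \<le> multiplicity p x"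
  proof (cases "multiplicity p r = 0")
    case False
    hence "p dvd r" using r0 p by (auto simp: prime_multiplicity_gt_zero_iff)
    hence "p dvd x" using pr p by blast
    hence "multiplicity p x \<ge> 1" using x p by (simp add: prime_multiplicity_gt_zero_iff Suc_le_eq)
    with le1 show ?thesis by simp
  qed simp
qed

lemma smult_sum_right: "smult a (sum f A) = (\<Sum>x\<in>A. smult a (f x))"
  by (rule hom_sum) (simp_all add: smult_add_right)

lemma exists_not_in: "finite (B :: real set) \<Longrightarrow> \<exists>t. t \<notin> B"
  using infinite_UNIV_char_0 by (metis UNIV_I finite_subset subsetI)

lemma avoid:
  fixes a b x :: bipoly
  assumes x: "x \<noteq> 0"
  shows "finite {t::real. \<exists>p. prime p \<and> p dvd x \<and> p dvd a + smult [:t:] b \<and> \<not> (p dvd a \<and> p dvd b)}"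
proof -
  define A where "A p = {t::real. p dvd a + smult [:t:] b \<and> \<not> (p dvd a \<and> p dvd b)}" for p
  have "{t::real. \<exists>p. prime p \<and> p dvd x \<and> p dvd a + smult [:t:] b \<and> \<not> (p dvd a \<and> p dvd b)}
        \<subseteq> (\<Union>p\<in>prime_factors x. A p)"
    using x by (auto simp: A_def in_prime_factors_iff)
  moreover have "finite (A p)" for p
  proof -
    have "t = t'" if "t \<in> A p" "t' \<in> A p" for t t'
    proof (rule ccontr)
      assume ne: "t \<noteq> t'"
      have "p dvd (a + smult [:t:] b) - (a + smult [:t':] b)" using that unfolding A_def by (intro dvd_diff) auto
      also have "(a + smult [:t:] b) - (a + smult [:t':] b) = [:[:t - t':]:] * b"
      proof -
        have e1: "(a + smult [:t:] b) - (a + smult [:t':] b) = smult ([:t:] - [:t':]) b" by (metis add_diff_cancel_left smult_diff_left)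
        have e2: "([:t:] - [:t':] :: real poly) = [:t - t':]" by simp
        have e3: "smult [:t - t':] b = [:[:t - t':]:] * b" by simp
        show ?thesis using e1 e2 e3 by metis
      qed
      finally have "p dvd b" using ne
        by (metis dvd_mult_unit_iff' is_unit_const_poly_iff dvd_field_iff right_minus_eq)
      moreover from this have "p dvd smult [:t:] b" by (simp add: dvd_smult)
      hence "p dvd a" using that by (auto simp: A_def dvd_add_left_iff)
      ultimately show False using that by (auto simp: A_def)
    qed
    hence "A p \<subseteq> {SOME t. t \<in> A p}" by (metis (mono_tags) someI_ex singletonI subsetI)
    thus ?thesis by (rule finite_subset) simp
  qed
  ultimately show ?thesis by (meson finite_UN finite_subset finite_set_mset)
qed

lemma rscale_smult: "rscale t p = smult [:t:] p" by (simp add: rscale_def)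

lemma stage2_gen:
  fixes \<sigma> :: "nat \<Rightarrow> bipoly"
  assumes nz: "\<sigma> 0 * \<sigma> 1 \<noteq> 0" and j: "2 \<le> j"
  shows "\<exists>c. \<forall>p. prime p \<longrightarrow> p dvd \<sigma> 0 \<longrightarrow> p dvd \<sigma> 1 \<longrightarrow>
            p dvd (\<Sum>i\<in>{2..j}. rscale (c i) (\<sigma> i)) \<longrightarrow> (\<forall>i\<in>{2..j}. p dvd \<sigma> i)"
  using j
proof (induction j rule: nat_induct_at_least)
  case base
  show ?case by (rule exI[of _ "\<lambda>_. 1"]) (simp add: rscale_def flip: one_pCons)
next
  case (Suc j)
  then obtain c where c: "\<forall>p. prime p \<longrightarrow> p dvd \<sigma> 0 \<longrightarrow> p dvd \<sigma> 1 \<longrightarrow>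
            p dvd (\<Sum>i\<in>{2..j}. rscale (c i) (\<sigma> i)) \<longrightarrow> (\<forall>i\<in>{2..j}. p dvd \<sigma> i)" by blast
  define g where "g = (\<Sum>i\<in>{2..j}. rscale (c i) (\<sigma> i))"
  define b where "b = \<sigma> (Suc j)"
  have fin: "finite {t::real. \<exists>p. prime p \<and> p dvd \<sigma> 0 * \<sigma> 1 \<and> p dvd g + smult [:t:] b \<and> \<not> (p dvd g \<and> p dvd b)}"
    by (rule avoid[OF nz])
  obtain t where t: "t \<notin> {t::real. \<exists>p. prime p \<and> p dvd \<sigma> 0 * \<sigma> 1 \<and> p dvd g + smult [:t:] b \<and> \<not> (p dvd g \<and> p dvd b)}"
    using exists_not_in[OF fin] by blast
  define c' where "c' = c(Suc j := t)"
  have "(\<Sum>i\<in>{2..Suc j}. rscale (c' i) (\<sigma> i)) = (\<Sum>i\<in>{2..j}. rscale (c' i) (\<sigma> i)) + rscale t b"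
    using Suc.hyps by (simp add: sum.cl_ivl_Suc c'_def b_def)
  also have "(\<Sum>i\<in>{2..j}. rscale (c' i) (\<sigma> i)) = g"
    unfolding g_def by (intro sum.cong) (auto simp: c'_def)
  finally have S: "(\<Sum>i\<in>{2..Suc j}. rscale (c' i) (\<sigma> i)) = g + smult [:t:] b" by (simp add: rscale_smult)
  show ?case
  proof (rule exI[of _ c'], intro allI impI)
    fix p :: bipoly assume p: "prime p" "p dvd \<sigma> 0" "p dvd \<sigma> 1" "p dvd (\<Sum>i\<in>{2..Suc j}. rscale (c' i) (\<sigma> i))"
    hence "p dvd g + smult [:t:] b" using S by simp
    moreover have "p dvd \<sigma> 0 * \<sigma> 1" using p by simp
    ultimately have gb: "p dvd g" "p dvd b" using t p(1) by auto
    hence "\<forall>i\<in>{2..j}. p dvd \<sigma> i" using c p unfolding g_def by blast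
    thus "\<forall>i\<in>{2..Suc j}. p dvd \<sigma> i" using gb by (auto simp: b_def le_Suc_eq)
  qed
qed

lemma stage3:
  fixes \<sigma> :: "nat \<Rightarrow> bipoly"
  assumes nz0: "\<sigma> 0 \<noteq> 0" and sq1: "squarefree (\<sigma> 1)"
  shows "\<exists>s. (\<exists>c. s = (\<Sum>i\<in>{1..6}. rscale (c i) (\<sigma> i))) \<and> squarefree s \<and>
            (\<forall>p. prime p \<longrightarrow> p dvd s \<longrightarrow> p dvd \<sigma> 0 \<longrightarrow> (\<forall>i\<le>6. p dvd \<sigma> i))"
proof -
  have nz1: "\<sigma> 1 \<noteq> 0" using sq1 by auto
  obtain cg where cg: "\<forall>p. prime p \<longrightarrow> p dvd \<sigma> 0 \<longrightarrow> p dvd \<sigma> 1 \<longrightarrow>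
            p dvd (\<Sum>i\<in>{2..6}. rscale (cg i) (\<sigma> i)) \<longrightarrow> (\<forall>i\<in>{2..6}. p dvd \<sigma> i)"
    using stage2_gen[of \<sigma> 6] nz0 nz1 by auto
  define g where "g = (\<Sum>i\<in>{2..6}. rscale (cg i) (\<sigma> i))"
  define f where "f = \<sigma> 1"
  define d where "d = gcd f g"
  have d0: "d \<noteq> 0" using nz1 by (simp add: d_def f_def)
  define f' where "f' = f div d"
  define g' where "g' = g div d"
  have ff: "f = f' * d" by (simp add: f'_def d_def)
  have gg: "g = g' * d" by (simp add: g'_def d_def)
  have cop: "coprime f' g'" using d0 ff gg unfolding d_def by (rule gcd_coprime)
  define x where "x = d * \<sigma> 0"
  have x0: "x \<noteq> 0" using d0 nz0 by (simp add: x_def)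
  define B1 where "B1 = {t::real. \<not> squarefree (f' + smult [:t:] g')}"
  define B2 where "B2 = {t::real. \<exists>p. prime p \<and> p dvd x \<and> p dvd f' + smult [:t:] g' \<and> \<not> (p dvd f' \<and> p dvd g')}"
  have "finite (B1 \<union> B2)" unfolding B1_def B2_def using pencil_bi[OF cop] avoid[OF x0] by simp
  then obtain t where t: "t \<notin> B1 \<union> B2" using exists_not_in by blast
  define q where "q = f' + smult [:t:] g'"
  have sqq: "squarefree q" using t by (simp add: B1_def q_def)
  have noc: "False" if "prime p" "p dvd q" "p dvd x" for p
  proof -
    have "p dvd f' \<and> p dvd g'" using t that by (auto simp: B2_def q_def)
    hence "is_unit p" using cop coprime_common_divisor by blast
    thus False using that by simp
  qed
  have copqd: "coprime q d"
  proof (rule coprimeI)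
    fix e assume e: "e dvd q" "e dvd d"
    show "is_unit e"
    proof (rule ccontr)
      assume "\<not> is_unit e"
      moreover have "e \<noteq> 0" using e d0 by auto
      ultimately obtain p where p: "p dvd e" "prime p" using prime_divisor_exists by blast
      have "p dvd q" using p e by (meson dvd_trans)
      moreover have "p dvd x" using p e unfolding x_def by (meson dvd_trans dvd_mult2)
      ultimately show False using noc p by blast
    qed
  qed
  have sqd: "squarefree d" using sq1 by (rule squarefree_mono[rotated]) (simp add: d_def f_def)
  define s where "s = q * d"
  have sqs: "squarefree s" unfolding s_def using copqd sqq sqd by (rule squarefree_mult_coprime)
  have s_eq: "s = f + smult [:t:] g" by (simp add: s_def q_def ff gg ring_distribs)
  define cs where "cs = (\<lambda>i. if i = 1 then 1 else t * cg i)"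
  have "(\<Sum>i\<in>{1..6}. rscale (cs i) (\<sigma> i)) = rscale (cs 1) (\<sigma> 1) + (\<Sum>i\<in>{2..6}. rscale (cs i) (\<sigma> i))"
  proof -
    have "{1..6::nat} = insert 1 {2..6}" by auto
    thus ?thesis by simp
  qed
  also have "(\<Sum>i\<in>{2..6}. rscale (cs i) (\<sigma> i)) = smult [:t:] g"
    unfolding g_def smult_sum_right by (intro sum.cong) (auto simp: cs_def rscale_def mult.commute)
  finally have s_sum: "s = (\<Sum>i\<in>{1..6}. rscale (cs i) (\<sigma> i))"
    by (simp add: s_eq cs_def f_def rscale_def flip: one_pCons)
  show ?thesis
  proof (intro exI conjI)
    show "s = (\<Sum>i\<in>{1..6}. rscale (cs i) (\<sigma> i))" by (rule s_sum)
    show "squarefree s" by (rule sqs)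
    show "\<forall>p. prime p \<longrightarrow> p dvd s \<longrightarrow> p dvd \<sigma> 0 \<longrightarrow> (\<forall>i\<le>6. p dvd \<sigma> i)"
    proof (intro allI impI)
    fix p :: bipoly and i :: nat assume p: "prime p" "p dvd s" "p dvd \<sigma> 0" and i: "i \<le> 6"
    have "\<not> p dvd q"
    proof
      assume "p dvd q"
      moreover have "p dvd x" using p by (simp add: x_def)
      ultimately show False using noc p by blast
    qed
    hence "p dvd d" using p by (simp add: s_def prime_dvd_mult_iff)
    hence pf: "p dvd f" and pg: "p dvd g" by (auto simp: ff gg)
    hence "\<forall>i\<in>{2..6}. p dvd \<sigma> i" using cg p unfolding g_def f_def by blast
    moreover have "i = 0 \<or> i = 1 \<or> i \<in> {2..6}" using i by auto
    ultimately show "p dvd \<sigma> i" using p pf unfolding f_def by auto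
    qed
  qed
qed




lemma dep7_vec:
  fixes v :: "nat \<Rightarrow> real \<times> real \<times> real \<times> real \<times> real \<times> real"
  shows "\<exists>c. (\<Sum>i\<le>6. c i *\<^sub>R v i) = 0 \<and> (\<exists>i\<le>6. c i \<noteq> 0)"
proof (cases "inj_on v {..6}")
  case False
  then obtain i j where ij: "i \<le> 6" "j \<le> 6" "i \<noteq> j" "v i = v j" by (auto simp: inj_on_def)
  define c where "c k = (if k = i then 1 else if k = j then -1 else 0 :: real)" for k
  have "(\<Sum>k\<le>6. c k *\<^sub>R v k) = (\<Sum>k\<in>{i,j}. c k *\<^sub>R v k)"
    by (intro sum.mono_neutral_right) (auto simp: c_def ij)
  also have "\<dots> = 0" using ij by (simp add: c_def)
  finally show ?thesis using ij by (intro exI[of _ c]) (auto simp: c_def)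
next
  case True
  define S where "S = v ` {..6}"
  have "card S = 7" using True by (simp add: S_def card_image)
  hence "\<not> independent S" using independent_bound[of S] by auto
  then obtain X u where X: "finite X" "X \<subseteq> S" "(\<Sum>w\<in>X. u w *\<^sub>R w) = 0" "\<exists>w\<in>X. u w \<noteq> 0"
    unfolding real_vector.dependent_explicit by blast
  define I where "I = {i\<in>{..6}. v i \<in> X}"
  have XI: "X = v ` I" using X(2) by (auto simp: I_def S_def)
  have injI: "inj_on v I" using True by (rule inj_on_subset) (auto simp: I_def)
  define c where "c i = (if i \<in> I then u (v i) else 0)" for i
  have "(\<Sum>i\<le>6. c i *\<^sub>R v i) = (\<Sum>i\<in>I. u (v i) *\<^sub>R v i)"
    by (intro sum.mono_neutral_cong_right) (auto simp: c_def I_def)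
  also have "\<dots> = (\<Sum>w\<in>X. u w *\<^sub>R w)" unfolding XI by (rule sum.reindex[OF injI, symmetric, unfolded o_def])
  also have "\<dots> = 0" by (rule X(3))
  finally show ?thesis using X(4) unfolding XI by (intro exI[of _ c]) (auto simp: c_def I_def)
qed

lemma dep7:
  fixes q :: "nat \<Rightarrow> bipoly"
  assumes deg: "\<forall>i\<le>6. tdeg (q i) \<le> 2"
  shows "\<exists>c. (\<Sum>i\<le>6. rscale (c i) (q i)) = 0 \<and> (\<exists>i\<le>6. c i \<noteq> 0)"
proof -
  define cf where "cf p a b = coeff (coeff p b) a" for p :: bipoly and a b
  define v where "v i = (cf (q i) 0 0, cf (q i) 1 0, cf (q i) 0 1, cf (q i) 2 0, cf (q i) 1 1, cf (q i) 0 2)" for i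
  obtain c where c: "(\<Sum>i\<le>6. c i *\<^sub>R v i) = 0" "\<exists>i\<le>6. c i \<noteq> 0" using dep7_vec by blast
  have cS: "coeff (coeff (\<Sum>i\<le>6. rscale (c i) (q i)) b) a = (\<Sum>i\<le>6. c i * cf (q i) a b)" for a b
    by (simp add: coeff_sum rscale_def cf_def)
  have c6: "(\<Sum>i\<le>6. c i * cf (q i) 0 0) = 0" "(\<Sum>i\<le>6. c i * cf (q i) 1 0) = 0"
     "(\<Sum>i\<le>6. c i * cf (q i) 0 1) = 0" "(\<Sum>i\<le>6. c i * cf (q i) 2 0) = 0"
     "(\<Sum>i\<le>6. c i * cf (q i) 1 1) = 0" "(\<Sum>i\<le>6. c i * cf (q i) 0 2) = 0"
    using arg_cong[OF c(1), of fst] arg_cong[OF c(1), of "\<lambda>x. fst (snd x)"]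
      arg_cong[OF c(1), of "\<lambda>x. fst (snd (snd x))"] arg_cong[OF c(1), of "\<lambda>x. fst (snd (snd (snd x)))"]
      arg_cong[OF c(1), of "\<lambda>x. fst (snd (snd (snd (snd x))))"] arg_cong[OF c(1), of "\<lambda>x. snd (snd (snd (snd (snd x))))"]
    by (simp_all add: fst_sum snd_sum v_def)
  have comps: "(\<Sum>i\<le>6. c i * cf (q i) a b) = 0" if "a + b \<le> 2" for a b
  proof -
    have "(a, b) \<in> {(0,0),(1,0),(0,1),(2,0),(1,1),(0,2)}" using that
      by (cases a; cases b) (auto simp: numeral_2_eq_2 le_Suc_eq)
    thus ?thesis using c6 by auto
  qed
  have zer: "cf (q i) a b = 0" if "a + b > 2" "i \<le> 6" for i a b
    using tdeg_ge[of "q i" b a] deg that unfolding cf_def by force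
  have "(\<Sum>i\<le>6. rscale (c i) (q i)) = 0"
  proof (intro poly_eqI)
    fix b a
    show "coeff (coeff (\<Sum>i\<le>6. rscale (c i) (q i)) b) a = coeff (coeff 0 b) a"
    proof (cases "a + b \<le> 2")
      case True thus ?thesis by (simp add: cS comps)
    next
      case False thus ?thesis by (simp add: cS zer)
    qed
  qed
  thus ?thesis using c(2) by blast
qed

theorem mainTheorem7:
  fixes \<sigma> :: "nat \<Rightarrow> bipoly" and k :: nat
  assumes indep: "\<forall>c :: nat \<Rightarrow> real. (\<Sum>i\<le>6. rscale (c i) (\<sigma> i)) = 0 \<longrightarrow> (\<forall>i\<le>6. c i = 0)"
    and deg: "\<forall>i\<le>6. tdeg (\<sigma> i) = k"
    and sqfree: "\<forall>i\<le>6. \<not> has_multiple_factor (\<sigma> i)"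
  shows "\<exists>s. (\<exists>c :: nat \<Rightarrow> real. s = (\<Sum>i\<in>{1..6}. rscale (c i) (\<sigma> i)))
           \<and> \<not> has_multiple_factor s
           \<and> (\<exists>\<gamma> \<gamma>0 r. s = \<gamma> * r \<and> \<sigma> 0 = \<gamma>0 * r \<and> coprime \<gamma> \<gamma>0 \<and> tdeg \<gamma>0 \<ge> 3)"
proof -
  have sq: "squarefree (\<sigma> i)" if "i \<le> 6" for i using sqfree that not_hmf by blast
  hence nz: "\<sigma> i \<noteq> 0" if "i \<le> 6" for i using that by fastforce
  obtain s where s: "\<exists>c. s = (\<Sum>i\<in>{1..6}. rscale (c i) (\<sigma> i))" "squarefree s"
    "\<forall>p. prime p \<longrightarrow> p dvd s \<longrightarrow> p dvd \<sigma> 0 \<longrightarrow> (\<forall>i\<le>6. p dvd \<sigma> i)"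
    using stage3[of \<sigma>] nz[of 0] sq[of 1] by auto
  define r where "r = gcd s (\<sigma> 0)"
  have r0: "r \<noteq> 0" using nz[of 0] by (simp add: r_def)
  define \<gamma> where "\<gamma> = s div r"
  define \<gamma>0 where "\<gamma>0 = \<sigma> 0 div r"
  have sg: "s = \<gamma> * r" by (simp add: \<gamma>_def r_def)
  have s0: "\<sigma> 0 = \<gamma>0 * r" by (simp add: \<gamma>0_def r_def)
  have cop: "coprime \<gamma> \<gamma>0" using r0 sg s0 unfolding r_def by (rule gcd_coprime)
  have g0: "\<gamma>0 \<noteq> 0" using s0 nz[of 0] by auto
  have deg3: "tdeg \<gamma>0 \<ge> 3"
  proof (rule ccontr)
    assume small: "\<not> tdeg \<gamma>0 \<ge> 3"
    have sqr: "squarefree r" by (rule squarefree_mono[OF _ sq[of 0]]) (simp_all add: r_def)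
    have rd: "r dvd \<sigma> i" if i: "i \<le> 6" for i
    proof (rule sqf_dvd[OF sqr nz[OF i]])
      fix p :: bipoly assume "prime p" "p dvd r"
      moreover from this have "p dvd s" "p dvd \<sigma> 0" by (auto simp: r_def intro: dvd_trans)
      ultimately show "p dvd \<sigma> i" using s(3) i by blast
    qed
    define qq where "qq i = \<sigma> i div r" for i
    have sq_eq: "\<sigma> i = r * qq i" if "i \<le> 6" for i using rd[OF that] by (simp add: qq_def)
    have tk: "tdeg \<gamma>0 + tdeg r = k" using deg s0 g0 r0 tdeg_mult by force
    have tq: "tdeg (qq i) \<le> 2" if i: "i \<le> 6" for i
    proof -
      have "qq i \<noteq> 0" using sq_eq[OF i] nz[OF i] by auto
      hence "tdeg r + tdeg (qq i) = k" using deg i sq_eq[OF i] r0 tdeg_mult by metis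
      thus ?thesis using tk small by linarith
    qed
    obtain c where c: "(\<Sum>i\<le>6. rscale (c i) (qq i)) = 0" "\<exists>i\<le>6. c i \<noteq> 0"
      using dep7[of qq] tq by blast
    have "(\<Sum>i\<le>6. rscale (c i) (\<sigma> i)) = (\<Sum>i\<le>6. r * rscale (c i) (qq i))"
      by (intro sum.cong) (auto simp: sq_eq rscale_def)
    also have "\<dots> = r * (\<Sum>i\<le>6. rscale (c i) (qq i))" by (simp add: sum_distrib_left)
    also have "\<dots> = 0" using c(1) by simp
    finally show False using indep c(2) by blast
  qed
  show ?thesis
    using s(1) s(2) sg s0 cop deg3 not_hmf by blast
qed


end
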